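(* For integers $n>1$ and $m>1$, $\chi_{ld}(F_m[\overline{K_{n}}])=3$.
   Context: All graphs are finite, simple and undirected. For a graph $G=(V,E)$ of order $N$ without isolated vertices, a bijection $f\colon V\to\{1,2,\dots,N\}$ is a local distance antimagic labeling if $w(u)\neq w(v)$ for every edge $uv$, where $w(u)=\sum_{x\in N(u)}f(x)$ and $N(u)$ is the open neighborhood of $u$. $\chi_{ld}(G)$ is the minimum number of distinct weights over all local distance antimagic labelings of $G$. The friendship graph $F_m=mK_2+K_1$ consists of $m$ disjoint edges together with a central vertex adjacent to all $2m$ of their endpoints. $\overline{K_n}$ is the edgeless graph on $n$ vertices. The lexicographic product $G[H]$ has vertex set $V(G)\times V(H)$, with $(g,h)$ adjacent to $(g',h')$ iff $gg'\in E(G)$, or $g=g'$ and $hh'\in E(H)$. *)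

theory Defs
  imports Main
begin

text \<open>A finite simple graph is given by a vertex set V and a symmetric irreflexive
adjacency relation E (only its restriction to V matters).\<close>

definition nbhd :: "'a set \<Rightarrow> ('a \<Rightarrow> 'a \<Rightarrow> bool) \<Rightarrow> 'a \<Rightarrow> 'a set" where
  "nbhd V E u = {x \<in> V. E u x}"

definition vweight :: "'a set \<Rightarrow> ('a \<Rightarrow> 'a \<Rightarrow> bool) \<Rightarrow> ('a \<Rightarrow> nat) \<Rightarrow> 'a \<Rightarrow> nat" where
  "vweight V E f u = (\<Sum>x\<in>nbhd V E u. f x)"

definition local_distance_antimagic ::
  "'a set \<Rightarrow> ('a \<Rightarrow> 'a \<Rightarrow> bool) \<Rightarrow> ('a \<Rightarrow> nat) \<Rightarrow> bool" where
  "local_distance_antimagic V E f \<longleftrightarrow>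
     bij_betw f V {1..card V} \<and>
     (\<forall>u\<in>V. \<forall>v\<in>V. E u v \<longrightarrow> vweight V E f u \<noteq> vweight V E f v)"

definition chi_ld :: "'a set \<Rightarrow> ('a \<Rightarrow> 'a \<Rightarrow> bool) \<Rightarrow> nat" where
  "chi_ld V E = (LEAST k. \<exists>f. local_distance_antimagic V E f \<and>
                          card (vweight V E f ` V) = k)"

text \<open>Friendship graph F_m: centre None, leaves Some (i,b) for i < m, b :: bool;
the i-th matching edge joins Some (i,False) and Some (i,True).\<close>

definition friendship_V :: "nat \<Rightarrow> (nat \<times> bool) option set" where
  "friendship_V m = insert None (Some ` ({..<m} \<times> UNIV))"

fun friendship_E :: "(nat \<times> bool) option \<Rightarrow> (nat \<times> bool) option \<Rightarrow> bool" where
  "friendship_E None None = False"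
| "friendship_E None (Some _) = True"
| "friendship_E (Some _) None = True"
| "friendship_E (Some (i, a)) (Some (j, b)) = (i = j \<and> a \<noteq> b)"

definition empty_V :: "nat \<Rightarrow> nat set" where
  "empty_V n = {..<n}"

definition empty_E :: "nat \<Rightarrow> nat \<Rightarrow> bool" where
  "empty_E u v = False"

definition lex_V :: "'a set \<Rightarrow> 'b set \<Rightarrow> ('a \<times> 'b) set" where
  "lex_V VG VH = VG \<times> VH"

definition lex_E :: "('a \<Rightarrow> 'a \<Rightarrow> bool) \<Rightarrow> ('b \<Rightarrow> 'b \<Rightarrow> bool) \<Rightarrow>
                    'a \<times> 'b \<Rightarrow> 'a \<times> 'b \<Rightarrow> bool" where
  "lex_E EG EH p q \<longleftrightarrow> EG (fst p) (fst q) \<or> (fst p = fst q \<and> EH (snd p) (snd q))"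

end

theory Submission
  imports Defs
begin

definition colx :: "nat \<Rightarrow> (nat \<times> bool) option \<Rightarrow> nat" where
  "colx m x = (case x of None \<Rightarrow> 2*m | Some (i,b) \<Rightarrow> if b then m+i else i)"

definition sp :: "nat \<Rightarrow> nat \<Rightarrow> nat \<Rightarrow> nat" where
  "sp n m c = (if even n then (if c < m then m-1-c else if c < 2*m then 3*m-1-c else 2*m)
               else (if c < m then 2*m-1-2*c else if c < 2*m then 4*m-2-2*c else 2*m))"

definition tt :: "nat \<Rightarrow> nat" where "tt n = (if even n then 2 else 3)"

definition prm :: "nat \<Rightarrow> nat \<Rightarrow> nat \<Rightarrow> nat \<Rightarrow> nat" where
  "prm n m j c = (if j < n - tt n then (if even j then c else 2*m - c)
                  else if j = n - 1 then sp n m c else c)"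

lemma sp_lt: "c < 2*m+1 \<Longrightarrow> sp n m c < 2*m+1"
  unfolding sp_def by auto

lemma sp_surj: assumes "r < 2*m+1" shows "\<exists>c<2*m+1. sp n m c = r"
proof (cases "even n")
  case True
  show ?thesis
  proof (cases "r < m")
    case True
    then show ?thesis using \<open>even n\<close> by (intro exI[of _ "m-1-r"]) (auto simp: sp_def)
  next
    case False
    show ?thesis
    proof (cases "r < 2*m")
      case True
      then show ?thesis using \<open>even n\<close> \<open>\<not> r < m\<close>
        by (intro exI[of _ "3*m-1-r"]) (auto simp: sp_def)
    next
      case False
      then show ?thesis using \<open>even n\<close> assms by (intro exI[of _ "2*m"]) (auto simp: sp_def)
    qed
  qed
next
  case odd: False
  show ?thesis
  proof (cases "r < 2*m")
    case True
    show ?thesis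
    proof (cases "odd r")
      case True
      then obtain q where q: "r = 2*q+1" by (metis oddE)
      show ?thesis using odd True \<open>r < 2*m\<close> q
        by (intro exI[of _ "m-1-q"]) (auto simp: sp_def)
    next
      case False
      then obtain q where q: "r = 2*q" by blast
      show ?thesis using odd False \<open>r < 2*m\<close> q
        by (intro exI[of _ "2*m-1-q"]) (auto simp: sp_def)
    qed
  next
    case False
    then show ?thesis using odd assms by (intro exI[of _ "2*m"]) (auto simp: sp_def)
  qed
qed

lemma prm_lt: "c < 2*m+1 \<Longrightarrow> prm n m j c < 2*m+1"
  unfolding prm_def using sp_lt by auto

lemma prm_surj: assumes "r < 2*m+1" shows "\<exists>c<2*m+1. prm n m j c = r"
proof -
  consider "j < n - tt n" "even j" | "j < n - tt n" "odd j" | "\<not> j < n - tt n" "j = n - 1"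
    | "\<not> j < n - tt n" "j \<noteq> n - 1" by blast
  then show ?thesis
  proof cases
    case 1 then show ?thesis using assms by (intro exI[of _ r]) (auto simp: prm_def)
  next
    case 2 then show ?thesis using assms by (intro exI[of _ "2*m-r"]) (auto simp: prm_def)
  next
    case 3 then show ?thesis using sp_surj[OF assms] by (auto simp: prm_def)
  next
    case 4 then show ?thesis using assms by (intro exI[of _ r]) (auto simp: prm_def)
  qed
qed

lemma pair_sum: "(c::nat) \<le> d \<Longrightarrow> (\<Sum>j<2*k. (if even j then c else d - c)) = k*d"
  by (induction k) auto

lemma prm_sum:
  assumes "n > 1" "c < 2*m+1"
  shows "(\<Sum>j<n. prm n m j c) = (n - tt n) div 2 * (2*m) + c * (tt n - 1) + sp n m c"
proof -
  define k where "k = (n - tt n) div 2"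
  have k: "n - tt n = 2*k" and nk: "n = 2*k + tt n"
    using assms(1) unfolding tt_def k_def by (cases "even n"; auto elim!: evenE oddE)+
  have "(\<Sum>j<2*k. prm n m j c) = (\<Sum>j<2*k. (if even j then c else 2*m - c))"
    by (rule sum.cong) (auto simp: prm_def k)
  also have "\<dots> = k*(2*m)" using assms(2) by (intro pair_sum) auto
  finally have P: "(\<Sum>j<2*k. prm n m j c) = k*(2*m)" .
  show ?thesis
  proof (cases "even n")
    case True
    then have n2: "n = Suc (Suc (2*k))" using nk by (simp add: tt_def)
    have "(\<Sum>j<n. prm n m j c) = (\<Sum>j<2*k. prm n m j c) + prm n m (2*k) c + prm n m (Suc (2*k)) c"
      by (simp add: n2)
    then show ?thesis using P True k n2 by (simp add: prm_def tt_def)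
  next
    case False
    then have n3: "n = Suc (Suc (Suc (2*k)))" using nk by (simp add: tt_def)
    have "(\<Sum>j<n. prm n m j c) = (\<Sum>j<2*k. prm n m j c) + prm n m (2*k) c + prm n m (Suc (2*k)) c
         + prm n m (Suc (Suc (2*k))) c"
      by (simp add: n3)
    then show ?thesis using P False k n3 by (simp add: prm_def tt_def)
  qed
qed


definition lab :: "nat \<Rightarrow> nat \<Rightarrow> (nat \<times> bool) option \<times> nat \<Rightarrow> nat" where
  "lab m n p = snd p * (2*m+1) + prm n m (snd p) (colx m (fst p)) + 1"

definition colS :: "nat \<Rightarrow> nat \<Rightarrow> nat \<Rightarrow> nat" where
  "colS m n c = (\<Sum>j<n. j*(2*m+1) + prm n m j c + 1)"

lemma V_eq: "lex_V (friendship_V m) (empty_V n) = friendship_V m \<times> {..<n}"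
  by (simp add: lex_V_def empty_V_def)

lemma E_eq: "lex_E friendship_E empty_E p q = friendship_E (fst p) (fst q)"
  by (simp add: lex_E_def empty_E_def)

lemma fin_FV: "finite (friendship_V m)" by (simp add: friendship_V_def)

lemma card_FV: "card (friendship_V m) = 2*m+1"
proof -
  have "card (Some ` ({..<m} \<times> (UNIV::bool set))) = 2*m"
    by (simp add: card_image card_cartesian_product)
  then show ?thesis unfolding friendship_V_def
    by (subst card_insert_disjoint) auto
qed

lemma colx_lt: "x \<in> friendship_V m \<Longrightarrow> colx m x < 2*m+1"
  by (auto simp: friendship_V_def colx_def)

lemma colx_surj: assumes "c < 2*m+1" shows "\<exists>x\<in>friendship_V m. colx m x = c"
proof -
  consider "c < m" | "m \<le> c" "c < 2*m" | "c = 2*m" using assms by linarith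
  then show ?thesis
  proof cases
    case 1 then show ?thesis by (intro bexI[of _ "Some (c,False)"]) (auto simp: friendship_V_def colx_def)
  next
    case 2 then show ?thesis by (intro bexI[of _ "Some (c-m,True)"]) (auto simp: friendship_V_def colx_def)
  next
    case 3 then show ?thesis by (intro bexI[of _ "None"]) (auto simp: friendship_V_def colx_def)
  qed
qed

lemma lab_image: "lab m n ` (friendship_V m \<times> {..<n}) = {1..(2*m+1)*n}"
proof
  show "lab m n ` (friendship_V m \<times> {..<n}) \<subseteq> {1..(2*m+1)*n}"
  proof
    fix y assume "y \<in> lab m n ` (friendship_V m \<times> {..<n})"
    then obtain x j where x: "x \<in> friendship_V m" "j < n" and y: "y = lab m n (x,j)" by auto
    have "prm n m j (colx m x) < 2*m+1" using prm_lt colx_lt x(1) by blast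
    moreover have "(j+1)*(2*m+1) \<le> n*(2*m+1)" using x(2) by (intro mult_le_mono1) simp
    ultimately show "y \<in> {1..(2*m+1)*n}" using y by (simp add: lab_def algebra_simps)
  qed
next
  show "{1..(2*m+1)*n} \<subseteq> lab m n ` (friendship_V m \<times> {..<n})"
  proof
    fix g assume g: "g \<in> {1..(2*m+1)*n}"
    define j where "j = (g-1) div (2*m+1)"
    define r where "r = (g-1) mod (2*m+1)"
    have "g - 1 = j*(2*m+1) + r" unfolding j_def r_def by (rule div_mult_mod_eq[symmetric])
    then have gj: "g = j*(2*m+1) + r + 1" using g by (simp del: add_Suc_right) linarith
    have "g - 1 < n*(2*m+1)" using g by (auto simp: algebra_simps)
    then have jn: "j < n" unfolding j_def by (rule less_mult_imp_div_less)
    have "r < 2*m+1" unfolding r_def by simp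
    then obtain c where c: "c < 2*m+1" "prm n m j c = r" using prm_surj by blast
    then obtain x where x: "x \<in> friendship_V m" "colx m x = c" using colx_surj by blast
    have "lab m n (x,j) = g" using gj c x by (simp add: lab_def)
    then show "g \<in> lab m n ` (friendship_V m \<times> {..<n})" using x jn by force
  qed
qed

lemma lab_bij: "bij_betw (lab m n) (friendship_V m \<times> {..<n}) {1..(2*m+1)*n}"
proof -
  have fin: "finite (friendship_V m \<times> {..<n})" using fin_FV by simp
  have cV: "card (friendship_V m \<times> {..<n}) = (2*m+1)*n"
    by (simp add: card_cartesian_product card_FV)
  have "inj_on (lab m n) (friendship_V m \<times> {..<n})"
    by (rule eq_card_imp_inj_on[OF fin]) (simp add: lab_image cV)
  then show ?thesis unfolding bij_betw_def using lab_image by blast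
qed

lemma sum_cols: "finite X \<Longrightarrow> (\<Sum>p\<in>X \<times> {..<n}. lab m n p) = (\<Sum>x\<in>X. colS m n (colx m x))"
  by (simp add: sum.cartesian_product' colS_def lab_def)

lemma nbhd_None: "nbhd (friendship_V m \<times> {..<n}) (lex_E friendship_E empty_E) (None, j)
   = (Some ` ({..<m} \<times> UNIV)) \<times> {..<n}"
  by (auto simp: nbhd_def E_eq friendship_V_def)

lemma nbhd_Some: assumes i: "i < m" shows "nbhd (friendship_V m \<times> {..<n}) (lex_E friendship_E empty_E) (Some (i,b), j)
   = {None, Some (i, \<not> b)} \<times> {..<n}"
proof (rule set_eqI)
  fix p :: "(nat \<times> bool) option \<times> nat"
  obtain x k where p: "p = (x,k)" by (cases p)
  show "p \<in> nbhd (friendship_V m \<times> {..<n}) (lex_E friendship_E empty_E) (Some (i,b), j)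
     \<longleftrightarrow> p \<in> {None, Some (i, \<not> b)} \<times> {..<n}"
  proof (cases x)
    case None then show ?thesis using p by (auto simp: nbhd_def E_eq friendship_V_def)
  next
    case (Some y)
    obtain i' b' where "y = (i',b')" by (cases y)
    then show ?thesis using p Some i by (auto simp: nbhd_def E_eq friendship_V_def)
  qed
qed


lemma colS_eq:
  assumes "n > 1" "c < 2*m+1"
  shows "colS m n c = ((\<Sum>j<n. j*(2*m+1)) + n) + (n - tt n) div 2 * (2*m) + c * (tt n - 1) + sp n m c"
proof -
  have "colS m n c = (\<Sum>j<n. j*(2*m+1)) + (\<Sum>j<n. prm n m j c) + n"
    unfolding colS_def sum.distrib by simp
  then show ?thesis using prm_sum[OF assms] by simp
qed

lemma colS_vals:
  assumes "n > 1" "m > 0"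
  defines "K \<equiv> ((\<Sum>j<n. j*(2*m+1)) + n) + (n - tt n) div 2 * (2*m)"
  shows "i < m \<Longrightarrow> colS m n i = K + (if even n then m-1 else 2*m-1)"
    and "i < m \<Longrightarrow> colS m n (m+i) = K + (if even n then 3*m-1 else 4*m-2)"
    and "colS m n (2*m) = K + (if even n then 4*m else 6*m)"
  using colS_eq[OF assms(1), of i m] colS_eq[OF assms(1), of "m+i" m] colS_eq[OF assms(1), of "2*m" m]
  by (auto simp: K_def sp_def tt_def)

lemma K_ge: "n \<le> ((\<Sum>j<n. j*(2*m+1)) + n) + (n - tt n) div 2 * (2*m)" by simp

lemma vw_None:
  assumes "\<And>i. i < m \<Longrightarrow> colS m n i = A" "\<And>i. i < m \<Longrightarrow> colS m n (m+i) = B"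
  shows "vweight (friendship_V m \<times> {..<n}) (lex_E friendship_E empty_E) (lab m n) (None, j) = m*(A+B)"
proof -
  have "vweight (friendship_V m \<times> {..<n}) (lex_E friendship_E empty_E) (lab m n) (None, j)
     = (\<Sum>x\<in>Some ` ({..<m} \<times> UNIV). colS m n (colx m x))"
    unfolding vweight_def nbhd_None by (rule sum_cols) simp
  also have "\<dots> = (\<Sum>y\<in>{..<m} \<times> UNIV. colS m n (colx m (Some y)))"
    by (subst sum.reindex) auto
  also have "\<dots> = (\<Sum>i<m. \<Sum>b\<in>UNIV. colS m n (colx m (Some (i,b))))"
    by (simp add: sum.cartesian_product')
  also have "\<dots> = (\<Sum>i<m. A + B)"
    by (rule sum.cong) (auto simp: UNIV_bool colx_def assms)
  finally show ?thesis by simp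
qed

lemma vw_Some:
  assumes "i < m"
  shows "vweight (friendship_V m \<times> {..<n}) (lex_E friendship_E empty_E) (lab m n) (Some (i,b), j)
     = colS m n (2*m) + colS m n (if b then i else m+i)"
proof -
  have "vweight (friendship_V m \<times> {..<n}) (lex_E friendship_E empty_E) (lab m n) (Some (i,b), j)
     = (\<Sum>x\<in>{None, Some (i, \<not> b)}. colS m n (colx m x))"
    unfolding vweight_def nbhd_Some[OF assms] by (rule sum_cols) simp
  then show ?thesis by (simp add: colx_def)
qed


lemma adjacent3:
  fixes f :: "(nat \<times> bool) option \<times> nat \<Rightarrow> nat"
  assumes "m > 0" "n > 0"
    and that: "local_distance_antimagic (friendship_V m \<times> {..<n}) (lex_E friendship_E empty_E) f"
  shows "3 \<le> card (vweight (friendship_V m \<times> {..<n}) (lex_E friendship_E empty_E) f ` (friendship_V m \<times> {..<n}))"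
proof -
  let ?V = "friendship_V m \<times> {..<n}" and ?E = "lex_E friendship_E empty_E"
  let ?w = "vweight ?V ?E f"
  have a: "(None,0) \<in> ?V" "(Some (0,False),0) \<in> ?V" "(Some (0,True),0) \<in> ?V"
    using assms by (auto simp: friendship_V_def)
  have d: "\<forall>u\<in>?V. \<forall>v\<in>?V. ?E u v \<longrightarrow> ?w u \<noteq> ?w v"
    using that unfolding local_distance_antimagic_def by blast
  have w1: "?w (None,0) \<noteq> ?w (Some (0,False),0)" using d a by (auto simp: E_eq)
  have w2: "?w (None,0) \<noteq> ?w (Some (0,True),0)" using d a by (auto simp: E_eq)
  have w3: "?w (Some (0,False),0) \<noteq> ?w (Some (0,True),0)" using d a by (auto simp: E_eq)
  have sub: "{?w (None,0), ?w (Some (0,False),0), ?w (Some (0,True),0)} \<subseteq> ?w ` ?V"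
    using a by blast
  have fin: "finite (?w ` ?V)" using fin_FV by simp
  have "card {?w (None,0), ?w (Some (0,False),0), ?w (Some (0,True),0)} = 3"
    using w1 w2 w3 by simp
  then show ?thesis using card_mono[OF fin sub] by simp
qed

theorem mainTheorem20:
  fixes m n :: nat
  assumes "m > 1" and "n > 1"
  shows "chi_ld (lex_V (friendship_V m) (empty_V n)) (lex_E friendship_E empty_E) = 3"
proof -
  let ?V = "friendship_V m \<times> {..<n}" and ?E = "lex_E friendship_E empty_E"
  let ?w = "vweight ?V ?E (lab m n)"
  define K where "K = ((\<Sum>j<n. j*(2*m+1)) + n) + (n - tt n) div 2 * (2*m)"
  define A where "A = K + (if even n then m-1 else 2*m-1)"
  define B where "B = K + (if even n then 3*m-1 else 4*m-2)"
  define C where "C = K + (if even n then 4*m else 6*m)"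
  have m0: "m > 0" using assms by simp
  have cA: "\<And>i. i < m \<Longrightarrow> colS m n i = A" using colS_vals(1)[OF assms(2) m0] unfolding A_def K_def by blast
  have cB: "\<And>i. i < m \<Longrightarrow> colS m n (m+i) = B" using colS_vals(2)[OF assms(2) m0] unfolding B_def K_def by blast
  have cC: "colS m n (2*m) = C" using colS_vals(3)[OF assms(2) m0] unfolding C_def K_def by blast
  have Kn: "K \<ge> n" unfolding K_def by simp
  have AB: "A \<noteq> B" unfolding A_def B_def using m0 by auto
  have mAB: "m*(A+B) \<ge> 2*(A+B)" using assms(1) by (intro mult_le_mono1) simp
  have CB: "C + B < 2*(A+B)" unfolding A_def B_def C_def using assms Kn by auto
  have CA: "C + A < 2*(A+B)" unfolding A_def B_def C_def using assms Kn by auto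
  have wN: "\<And>j. ?w (None,j) = m*(A+B)" using vw_None[of m n A B] cA cB by blast
  have wS: "\<And>i b j. i < m \<Longrightarrow> ?w (Some (i,b),j) = C + (if b then A else B)"
    using vw_Some cA cB cC by simp
  have lda: "local_distance_antimagic ?V ?E (lab m n)"
    unfolding local_distance_antimagic_def
  proof (intro conjI ballI impI)
    show "bij_betw (lab m n) ?V {1..card ?V}"
      using lab_bij[of m n] by (simp add: card_cartesian_product card_FV)
  next
    fix u v assume u: "u \<in> ?V" and v: "v \<in> ?V" and e: "?E u v"
    obtain x j where ux: "u = (x,j)" by (cases u)
    obtain y k where vy: "v = (y,k)" by (cases v)
    show "?w u \<noteq> ?w v"
    proof (cases x)
      case None
      then obtain i b where y: "y = Some (i,b)" using e ux vy by (cases y) (auto simp: E_eq)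
      then have "i < m" using v vy by (auto simp: friendship_V_def)
      then show ?thesis using None y ux vy wN wS mAB CA CB by (cases b) auto
    next
      case (Some p)
      then obtain i b where x: "x = Some (i,b)" by (cases p) auto
      then have i: "i < m" using u ux by (auto simp: friendship_V_def)
      show ?thesis
      proof (cases y)
        case None
        then show ?thesis using x i ux vy wN wS mAB CA CB by (cases b) auto
      next
        case (Some q)
        then obtain i' b' where y: "y = Some (i',b')" by (cases q) auto
        then have "i' = i" "b' = (\<not> b)" using e x ux vy by (auto simp: E_eq)
        then show ?thesis using x y i ux vy wS AB by (cases b) auto
      qed
    qed
  qed
  have img: "?w ` ?V = {m*(A+B), C + A, C + B}"
  proof
    show "?w ` ?V \<subseteq> {m*(A+B), C + A, C + B}"
    proof
      fix z assume "z \<in> ?w ` ?V"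
      then obtain x j where xj: "(x,j) \<in> ?V" "z = ?w (x,j)" by auto
      show "z \<in> {m*(A+B), C + A, C + B}"
      proof (cases x)
        case None then show ?thesis using xj wN by simp
      next
        case (Some p)
        then obtain i b where x: "x = Some (i,b)" by (cases p) auto
        then have "i < m" using xj by (auto simp: friendship_V_def)
        then show ?thesis using xj x wS by simp
      qed
    qed
  next
    have a: "(None,0) \<in> ?V" "(Some (0,False),0) \<in> ?V" "(Some (0,True),0) \<in> ?V"
      using assms by (auto simp: friendship_V_def)
    have "?w (None,0) = m*(A+B)" "?w (Some (0,True),0) = C + A" "?w (Some (0,False),0) = C + B"
      using wN wS m0 by auto
    then show "{m*(A+B), C + A, C + B} \<subseteq> ?w ` ?V" using a by (metis empty_subsetI image_eqI insert_subset)
  qed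
  have c3: "card (?w ` ?V) = 3" unfolding img using AB mAB CA CB by auto
  show ?thesis
    unfolding chi_ld_def V_eq
  proof (rule Least_equality)
    show "\<exists>f. local_distance_antimagic ?V ?E f \<and> card (vweight ?V ?E f ` ?V) = 3"
      using lda c3 by blast
  next
    fix k assume "\<exists>f. local_distance_antimagic ?V ?E f \<and> card (vweight ?V ?E f ` ?V) = k"
    then obtain f where "local_distance_antimagic ?V ?E f" "card (vweight ?V ?E f ` ?V) = k" by blast
    then show "3 \<le> k" using adjacent3[of m n f] assms by simp
  qed
qed

end
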